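(* Let $m\ge1$, $k\ge1$, $n\ge2$, let $\ell=(\ell_1,\dots,\ell_m)$ with $\ell_i\ge0$, $\sum_i\ell_i=1$, and let $\mathbf{P}=(p_{ij})$ be a symmetric $m\times m$ matrix with entries in $[0,1]$. Let $G=(V,E)$ be a random graph on $n=|V|$ nodes drawn from $\mathcal{W}_k(\mathbf{P},\ell)$, and let $s=\sum_{i,j\in[m]}p_{ij}\ell_i\ell_j$. Then: (i) for every integer $1\le d\le n-1$, $$\mathbb{E}[S_d]=n\binom{n-1}{d}\Bigl(\sum_{i_1,\dots,i_{d+1}\in[m]}\prod_{j=2}^{d+1}p_{i_1i_j}\prod_{j=1}^{d+1}\ell_{i_j}\Bigr)^k;$$ in particular $\mathbb{E}[S_2]=n\binom{n-1}{2}\bigl(\sum_{i_1,i_2,i_3\in[m]}p_{i_1i_2}p_{i_1i_3}\ell_{i_1}\ell_{i_2}\ell_{i_3}\bigr)^k$. (ii) The variance of the number of edges is $$\operatorname{Var}(|E|)=\binom{n}{2}s^k\Bigl(1-\binom{n}{2}s^k\Bigr)+2\,\mathbb{E}[S_2]+\binom{n}{2}\binom{n-2}{2}s^{2k}.$$ (iii) For every integer $2\le t\le n$, $\mathbb{E}[C_t]=\binom{n}{t}s_t^k$, where $$s_t=\sum_{i_1,\dots,i_t\in[m]}\Bigl(\prod_{1\le j<q\le t}p_{i_ji_q}\Bigr)\ell_{i_1}\ell_{i_2}\cdots\ell_{i_t};$$ in particular $\mathbb{E}[C_3]=\binom{n}{3}\bigl(\sum_{i,j,t\in[m]}p_{ij}p_{it}p_{jt}\ell_i\ell_j\ell_t\bigr)^k$.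 (iv) Writing $D_d$ for the number of nodes of degree exactly $d$, one has $\mathbb{E}[D_{n-1}]=\mathbb{E}[S_{n-1}]$ and, for $1\le d\le n-2$, $$\mathbb{E}[D_d]=\mathbb{E}[S_d]-\sum_{i=d+1}^{n-1}\binom{i}{d}\mathbb{E}[D_i].$$
   Context: Multifractal network generator (MFNG). Given $m$, $\ell$, $\mathbf{P}$ and a recursion depth $k\ge1$, $\mathcal{W}_k(\mathbf{P},\ell)$ is the distribution of the undirected random graph on $n$ nodes produced as follows. (1) Partition $[0,1]$ into $m$ consecutive subintervals of lengths $\ell_1,\dots,\ell_m$; recursively partition each into $m$ pieces with relative lengths $\ell_1,\dots,\ell_m$, for $k$ levels in total, giving $m^k$ intervals indexed by $(i_1,\dots,i_k)\in[m]^k$ of lengths $\prod_r\ell_{i_r}$. (2) Each node is placed at an independent uniform point of $[0,1]$ and receives the category tuple $c(u)=(i_1,\dots,i_k)$ of its interval. (3) Conditionally on the categories, independently for each pair of distinct nodes $u,v$ with $c(u)=(i_1,\dots,i_k)$, $c(v)=(j_1,\dots,j_k)$, the edge $\{u,v\}$ is present with probability $\prod_{r=1}^kp_{i_rj_r}$. Subgraph counts. A $d$-star is a graph on $d+1$ vertices in which one center vertex is joined to each of the other $d$ vertices (and no other edges). $S_d$ denotes the number of (not necessarily induced) $d$-stars in $G$, counted as the number of pairs $(v,D)$ with $v\in V$ and $D$ a $d$-element subset of the neighbors of $v$; $2$-stars are called wedges. A $t$-clique is a set of $t$ vertices that are pairwise adjacent; $C_t$ denotes the number of $t$-cliques in $G$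 ($3$-cliques are triangles). *)

theory Defs
  imports "HOL-Probability.Probability"
begin

text \<open>Categories at each level are indices 0..m-1,
  the length vector is l :: nat => real (entries l 0 .. l (m-1)), the probability
  matrix is P :: nat => nat => real. Nodes are 0..n-1. A graph is represented by its
  edge set, a set of pairs (u,v) with u < v < n.\<close>

text \<open>Distribution of the level-index of a uniform point: index i with probability l i
  (the length of the i-th subinterval).\<close>
definition level_pmf :: "nat \<Rightarrow> (nat \<Rightarrow> real) \<Rightarrow> nat pmf" where
  "level_pmf m l = embed_pmf (\<lambda>i. if i < m then l i else 0)"

text \<open>Category tuple (i_1,...,i_k), encoded as a function on {0..<k}: a uniform point of
  [0,1] falls into the interval indexed by (i_1,...,i_k) with probability equal to its length
  prod_r l_{i_r}, i.e. the levels are independent.\<close>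
definition category_pmf :: "nat \<Rightarrow> (nat \<Rightarrow> real) \<Rightarrow> nat \<Rightarrow> (nat \<Rightarrow> nat) pmf" where
  "category_pmf m l k = Pi_pmf {0..<k} 0 (\<lambda>_. level_pmf m l)"

definition edge_prob :: "(nat \<Rightarrow> nat \<Rightarrow> real) \<Rightarrow> nat \<Rightarrow> (nat \<Rightarrow> nat) \<Rightarrow> (nat \<Rightarrow> nat) \<Rightarrow> real" where
  "edge_prob P k cu cv = (\<Prod>r<k. P (cu r) (cv r))"

definition node_pairs :: "nat \<Rightarrow> (nat \<times> nat) set" where
  "node_pairs n = {(u,v). u < v \<and> v < n}"

definition mfng :: "nat \<Rightarrow> nat \<Rightarrow> (nat \<Rightarrow> real) \<Rightarrow> (nat \<Rightarrow> nat \<Rightarrow> real) \<Rightarrow> nat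
                     \<Rightarrow> (nat \<times> nat) set pmf" where
  "mfng n m l P k =
     do { c \<leftarrow> Pi_pmf {0..<n} (\<lambda>_. 0) (\<lambda>_. category_pmf m l k);
          b \<leftarrow> Pi_pmf (node_pairs n) False
                 (\<lambda>(u,v). bernoulli_pmf (edge_prob P k (c u) (c v)));
          return_pmf {e \<in> node_pairs n. b e} }"

definition adj :: "(nat \<times> nat) set \<Rightarrow> nat \<Rightarrow> nat \<Rightarrow> bool" where
  "adj E u v \<longleftrightarrow> u \<noteq> v \<and> (min u v, max u v) \<in> E"

definition nbrs :: "nat \<Rightarrow> (nat \<times> nat) set \<Rightarrow> nat \<Rightarrow> nat set" where
  "nbrs n E v = {u. u < n \<and> adj E v u}"

definition stars :: "nat \<Rightarrow> nat \<Rightarrow> (nat \<times> nat) set \<Rightarrow> nat" where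
  "stars n d E = card {(v, D). v < n \<and> D \<subseteq> nbrs n E v \<and> card D = d}"

definition cliques :: "nat \<Rightarrow> nat \<Rightarrow> (nat \<times> nat) set \<Rightarrow> nat" where
  "cliques n t E = card {S. S \<subseteq> {0..<n} \<and> card S = t \<and>
                              (\<forall>u\<in>S. \<forall>v\<in>S. u \<noteq> v \<longrightarrow> adj E u v)}"

definition deg_count :: "nat \<Rightarrow> nat \<Rightarrow> (nat \<times> nat) set \<Rightarrow> nat" where
  "deg_count n d E = card {v. v < n \<and> card (nbrs n E v) = d}"

definition s_clique :: "nat \<Rightarrow> (nat \<Rightarrow> real) \<Rightarrow> (nat \<Rightarrow> nat \<Rightarrow> real) \<Rightarrow> nat \<Rightarrow> real" where
  "s_clique m l P t = (\<Sum>f \<in> {0..<t} \<rightarrow>\<^sub>E {0..<m}.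
      (\<Prod>(j,q) \<in> {(j,q). j < q \<and> q < t}. P (f j) (f q)) * (\<Prod>j<t. l (f j)))"

text \<open>Star sum: over (i_1..i_{d+1}) in [m]^{d+1}, with i_1 the centre (index 0 here).\<close>
definition s_star :: "nat \<Rightarrow> (nat \<Rightarrow> real) \<Rightarrow> (nat \<Rightarrow> nat \<Rightarrow> real) \<Rightarrow> nat \<Rightarrow> real" where
  "s_star m l P d = (\<Sum>f \<in> {0..<d+1} \<rightarrow>\<^sub>E {0..<m}.
      (\<Prod>j\<in>{1..d}. P (f 0) (f j)) * (\<Prod>j\<in>{0..d}. l (f j)))"

end

theory Submission
  imports Defs
begin

locale mf =
  fixes n m k :: nat and l :: "nat \<Rightarrow> real" and P :: "nat \<Rightarrow> nat \<Rightarrow> real"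
  assumes lnn: "\<And>i. i < m \<Longrightarrow> l i \<ge> 0"
    and lsum: "(\<Sum>i<m. l i) = 1"
    and Psym: "\<And>i j. P i j = P j i"
    and Pbd: "\<And>i j. 0 \<le> P i j \<and> P i j \<le> 1"
begin

abbreviation L where "L \<equiv> level_pmf m l"

lemma pmf_L: "pmf L i = (if i < m then l i else 0)"
  unfolding level_pmf_def
proof (rule pmf_embed_pmf)
  show "\<And>x. 0 \<le> (if x < m then l x else 0)" using lnn by auto
  have "(\<integral>\<^sup>+ x. ennreal (if x < m then l x else 0) \<partial>count_space UNIV) = (\<Sum>x\<in>{..<m}. ennreal (if x < m then l x else 0))"
    by (rule nn_integral_count_space') auto
  also have "\<dots> = ennreal (\<Sum>x<m. l x)"
    by (subst sum_ennreal) (auto simp: lnn)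
  finally show "(\<integral>\<^sup>+ x. ennreal (if x < m then l x else 0) \<partial>count_space UNIV) = 1"
    using lsum by simp
qed

lemma set_L: "set_pmf L \<subseteq> {..<m}"
  by (auto simp: set_pmf_eq pmf_L split: if_splits)

abbreviation X where "X S \<equiv> Pi_pmf S (0::nat) (\<lambda>_. L)"

definition hom :: "nat set \<Rightarrow> (nat \<times> nat) set \<Rightarrow> real" where
  "hom S F = measure_pmf.expectation (X S) (\<lambda>x. \<Prod>(a,b)\<in>F. P (x a) (x b))"

lemma finite_set_X: "finite S \<Longrightarrow> finite (set_pmf (X S))"
proof -
  assume S: "finite S"
  have "set_pmf (X S) \<subseteq> PiE_dflt S 0 (\<lambda>_. {..<m})"
    using set_Pi_pmf_subset'[OF S, of 0 "\<lambda>_. L"] set_L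
    by (auto simp: PiE_dflt_def)
  moreover have "finite (PiE_dflt S 0 (\<lambda>_. {..<m}))" using S by auto
  ultimately show ?thesis by (rule finite_subset)
qed

lemma hom_restrict:
  assumes "finite S'" "S \<subseteq> S'" "F \<subseteq> S \<times> S"
  shows "hom S' F = hom S F"
proof -
  have "hom S F = measure_pmf.expectation (X S') (\<lambda>x. \<Prod>(a,b)\<in>F. P ((\<lambda>z. if z \<in> S then x z else 0) a) ((\<lambda>z. if z \<in> S then x z else 0) b))"
    unfolding hom_def by (subst Pi_pmf_subset[OF assms(1,2)]) simp
  also have "\<dots> = hom S' F" unfolding hom_def
    by (intro Bochner_Integration.integral_cong refl prod.cong) (use assms(3) in auto)
  finally show ?thesis by simp
qed

lemma hom_relabel:
  fixes \<phi> :: "(nat \<Rightarrow> nat) \<Rightarrow> real"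
  assumes "finite T" "bij_betw h T S" "\<And>x. x \<notin> T \<Longrightarrow> h x \<notin> S"
  shows "measure_pmf.expectation (X T) \<phi> = measure_pmf.expectation (X S) (\<lambda>g. \<phi> (g \<circ> h))"
  proof -
  have "X T = map_pmf (\<lambda>g. g\<circ>h) (X S)" by (rule Pi_pmf_bij_betw[OF assms])
  then show ?thesis by simp
qed

lemma X_sum:
  assumes S: "finite S"
  shows "measure_pmf.expectation (X S) \<phi> =
     (\<Sum>y\<in>PiE S (\<lambda>_. {..<m}). \<phi> (\<lambda>x. if x \<in> S then y x else 0) * (\<Prod>a\<in>S. l (y a)))"
proof -
  let ?e = "\<lambda>y x. if x \<in> S then y x else (0::nat)"
  have "measure_pmf.expectation (X S) \<phi> = (\<Sum>a\<in>?e ` PiE S (\<lambda>_. {..<m}). \<phi> a * pmf (X S) a)"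
  proof (rule integral_measure_pmf_real)
    show "finite (?e ` PiE S (\<lambda>_. {..<m}))" using S by (intro finite_imageI finite_PiE) auto
    fix a assume "a \<in> set_pmf (X S)"
    then have "a \<in> PiE_dflt S 0 (\<lambda>_. {..<m})"
      using set_Pi_pmf_subset'[OF S, of 0 "\<lambda>_. L"] set_L by (auto simp: PiE_dflt_def)
    then show "a \<in> ?e ` PiE S (\<lambda>_. {..<m})" using dflt_image_PiE by metis
  qed
  also have "\<dots> = (\<Sum>y\<in>PiE S (\<lambda>_. {..<m}). \<phi> (?e y) * pmf (X S) (?e y))"
  proof (rule sum.reindex[unfolded comp_def])
    show "inj_on ?e (PiE S (\<lambda>_. {..<m}))"
      by (rule inj_onI) (auto simp: fun_eq_iff PiE_def extensional_def split: if_splits; metis)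
  qed
  also have "\<dots> = (\<Sum>y\<in>PiE S (\<lambda>_. {..<m}). \<phi> (?e y) * (\<Prod>a\<in>S. l (y a)))"
    by (intro sum.cong refl) (auto simp: pmf_Pi' S pmf_L PiE_def Pi_def intro!: prod.cong)
  finally show ?thesis .
qed

lemma prod_if_zero:
  assumes "finite A"
  shows "(\<Prod>x\<in>A. if Q x then f x else (0::real)) = (if \<forall>x\<in>A. Q x then \<Prod>x\<in>A. f x else 0)"
proof (cases "\<forall>x\<in>A. Q x")
  case True then show ?thesis by (auto intro: prod.cong)
next
  case False
  then obtain x where "x \<in> A" "\<not> Q x" by auto
  then show ?thesis using assms by (auto intro!: prod_zero)
qed

abbreviation C where "C \<equiv> Pi_pmf {0..<n} (\<lambda>_. 0) (\<lambda>_. category_pmf m l k)"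

lemma C_transpose:
  "C = map_pmf (\<lambda>d u r. d r u) (Pi_pmf {0..<k} (\<lambda>_. 0) (\<lambda>_. X {0..<n}))"
proof (rule pmf_eqI)
  fix c :: "nat \<Rightarrow> nat \<Rightarrow> nat"
  let ?T = "\<lambda>(d::nat \<Rightarrow> nat \<Rightarrow> nat) u r. d r u"
  have inj: "inj ?T" by (rule injI) (simp add: fun_eq_iff)
  have "pmf (map_pmf ?T (Pi_pmf {0..<k} (\<lambda>_. 0) (\<lambda>_. X {0..<n}))) c
      = pmf (Pi_pmf {0..<k} (\<lambda>_. 0) (\<lambda>_. X {0..<n})) (?T c)"
    using pmf_map_inj'[OF inj, of _ "?T c"] by simp
  also have "\<dots> = (if \<forall>u r. (u \<notin> {0..<n} \<or> r \<notin> {0..<k}) \<longrightarrow> c u r = 0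
                     then \<Prod>r\<in>{0..<k}. \<Prod>u\<in>{0..<n}. pmf L (c u r) else 0)"
    by (simp add: pmf_Pi prod_if_zero fun_eq_iff) (metis atLeastLessThan_iff not_gr_zero zero_le)
  also have "\<dots> = pmf C c"
    unfolding category_pmf_def
    by (simp add: pmf_Pi prod_if_zero fun_eq_iff prod.swap[of _ "{0..<k}"]) (metis atLeastLessThan_iff not_gr_zero zero_le)
  finally show "pmf C c = pmf (map_pmf ?T (Pi_pmf {0..<k} (\<lambda>_. 0) (\<lambda>_. X {0..<n}))) c" by (rule sym)
qed

lemma C_edges:
  "measure_pmf.expectation C (\<lambda>c. \<Prod>(u,v)\<in>F. edge_prob P k (c u) (c v)) = hom {0..<n} F ^ k"
proof -
  have "measure_pmf.expectation C (\<lambda>c. \<Prod>(u,v)\<in>F. edge_prob P k (c u) (c v))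
     = measure_pmf.expectation (Pi_pmf {0..<k} (\<lambda>_. 0) (\<lambda>_. X {0..<n}))
          (\<lambda>d. \<Prod>r\<in>{0..<k}. (\<lambda>x. \<Prod>(a,b)\<in>F. P (x a) (x b)) (d r))"
    unfolding C_transpose edge_prob_def
    by (simp add: case_prod_unfold atLeast0LessThan prod.swap[of _ F])
  also have "\<dots> = (\<Prod>r\<in>{0..<k}. hom {0..<n} F)"
    unfolding hom_def
    by (rule expectation_prod_Pi_pmf)
       (auto intro!: integrable_measure_pmf_finite finite_set_X prod_nonneg simp: Pbd case_prod_unfold)
  finally show ?thesis by simp
qed

abbreviation NP where "NP \<equiv> node_pairs n"
abbreviation B where "B c \<equiv> Pi_pmf NP False (\<lambda>(u,v). bernoulli_pmf (edge_prob P k (c u) (c v)))"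
abbreviation G where "G \<equiv> mfng n m l P k"

lemma finite_NP: "finite NP"
  by (rule finite_subset[of _ "{..<n} \<times> {..<n}"]) (auto simp: node_pairs_def)

lemma G_eq: "G = bind_pmf C (\<lambda>c. map_pmf (\<lambda>b. {e\<in>NP. b e}) (B c))"
  by (simp add: mfng_def map_pmf_def)

lemma set_G: "set_pmf G \<subseteq> Pow NP"
  unfolding G_eq by auto

lemma finite_set_G: "finite (set_pmf G)"
  by (rule finite_subset[OF set_G]) (simp add: finite_NP)

lemma ep_bd: "0 \<le> edge_prob P k a b" "edge_prob P k a b \<le> 1"
  unfolding edge_prob_def by (auto intro!: prod_nonneg prod_le_1 simp: Pbd)

lemma inner_prob:
  assumes "F \<subseteq> NP"
  shows "measure_pmf.prob (B c) {b. F \<subseteq> {e\<in>NP. b e}}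
         = (\<Prod>(u,v)\<in>F. edge_prob P k (c u) (c v))"
proof -
  have "{b. F \<subseteq> {e\<in>NP. b e}} = Pi NP (\<lambda>e. if e \<in> F then {True} else UNIV)"
    using assms by (auto simp: Pi_def)
  then have "measure_pmf.prob (B c) {b. F \<subseteq> {e\<in>NP. b e}}
     = (\<Prod>e\<in>NP. measure_pmf.prob ((\<lambda>(u,v). bernoulli_pmf (edge_prob P k (c u) (c v))) e)
             (if e \<in> F then {True} else UNIV))"
    by (simp add: measure_Pi_pmf_Pi finite_NP)
  also have "\<dots> = (\<Prod>e\<in>NP. if e \<in> F then (\<lambda>(u,v). edge_prob P k (c u) (c v)) e else 1)"
    by (intro prod.cong refl) (auto simp: measure_pmf_single ep_bd)
  also have "\<dots> = (\<Prod>e\<in>F. (\<lambda>(u,v). edge_prob P k (c u) (c v)) e)"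
    using assms finite_NP by (simp add: prod.If_cases Int_absorb1)
  finally show ?thesis by (simp add: case_prod_unfold)
qed

lemma prob_subset:
  assumes "F \<subseteq> NP"
  shows "measure_pmf.prob G {E. F \<subseteq> E} = hom {0..<n} F ^ k"
proof -
  let ?\<rho> = "\<lambda>c. (\<Prod>(u,v)\<in>F. edge_prob P k (c u) (c v))"
  have rnn: "0 \<le> ?\<rho> c" for c by (auto intro!: prod_nonneg simp: ep_bd case_prod_unfold)
  have int: "integrable C ?\<rho>"
    by (rule measure_pmf.integrable_const_bound[where B=1])
       (auto intro!: AE_pmfI prod_nonneg prod_le_1 simp: ep_bd case_prod_unfold abs_prod)
  have "ennreal (measure_pmf.prob G {E. F \<subseteq> E}) = emeasure G {E. F \<subseteq> E}"
    by (simp add: measure_pmf.emeasure_eq_measure)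
  also have "\<dots> = (\<integral>\<^sup>+c. emeasure (B c) {b. F \<subseteq> {e\<in>NP. b e}} \<partial>C)"
    unfolding G_eq by (simp add: vimage_def)
  also have "\<dots> = (\<integral>\<^sup>+c. ennreal (?\<rho> c) \<partial>C)"
    by (intro nn_integral_cong) (simp add: measure_pmf.emeasure_eq_measure inner_prob[OF assms])
  also have "\<dots> = ennreal (measure_pmf.expectation C ?\<rho>)"
    by (rule nn_integral_eq_integral[OF int]) (simp add: rnn)
  finally have "measure_pmf.prob G {E. F \<subseteq> E} = measure_pmf.expectation C ?\<rho>"
    by (subst (asm) ennreal_inj) (auto intro!: Bochner_Integration.integral_nonneg rnn)
  then show ?thesis by (simp add: C_edges)
qed

lemma expect_count:
  assumes "finite I" "\<And>i. i \<in> I \<Longrightarrow> F i \<subseteq> NP"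
  shows "measure_pmf.expectation G (\<lambda>E. real (card {i\<in>I. F i \<subseteq> E}))
         = (\<Sum>i\<in>I. hom {0..<n} (F i) ^ k)"
proof -
  have "measure_pmf.expectation G (\<lambda>E. real (card {i\<in>I. F i \<subseteq> E}))
      = measure_pmf.expectation G (\<lambda>E. \<Sum>i\<in>I. indicator {E. F i \<subseteq> E} E)"
    using assms(1) by (intro Bochner_Integration.integral_cong refl) (simp add: indicator_def sum.If_cases Int_def)
  also have "\<dots> = (\<Sum>i\<in>I. measure_pmf.expectation G (indicator {E. F i \<subseteq> E}))"
    by (rule Bochner_Integration.integral_sum) (rule integrable_measure_pmf_finite[OF finite_set_G])
  also have "\<dots> = (\<Sum>i\<in>I. hom {0..<n} (F i) ^ k)"
    by (intro sum.cong refl) (simp add: prob_subset assms(2))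
  finally show ?thesis .
qed

definition SE :: "nat \<Rightarrow> nat set \<Rightarrow> (nat \<times> nat) set" where
  "SE v D = (\<lambda>u. (min v u, max v u)) ` D"

lemma hom_star:
  assumes v: "v < n" and D: "D \<subseteq> {0..<n} - {v}" "card D = d"
  shows "hom {0..<n} (SE v D) = s_star m l P d"
proof -
  have fD: "finite D" using D by (meson finite_atLeastLessThan finite_Diff finite_subset)
  obtain f where f: "bij_betw f {0..<d} D" using ex_bij_betw_nat_finite[OF fD] D by auto
  define h where "h j = (if j = 0 then v else if j \<le> d then f (j - 1) else n + j)" for j
  have fin: "f j \<in> D" if "j < d" for j using f that by (auto simp: bij_betw_def)
  have fin': "f (j - 1) \<in> D" if "0 < j" "j < d + 1" for j using fin that by simp
  have vD: "v \<notin> D" using D by auto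
  have hbij: "bij_betw h {0..<d+1} (insert v D)"
  proof (rule bij_betw_imageI)
    show "inj_on h {0..<d+1}"
    proof (rule inj_onI)
      fix i j assume ij: "i \<in> {0..<d+1}" "j \<in> {0..<d+1}" "h i = h j"
      show "i = j"
      proof (cases "i = 0"; cases "j = 0")
        assume "i \<noteq> 0" "j \<noteq> 0"
        then have "f (i - 1) = f (j - 1)" using ij by (simp add: h_def)
        then have "i - 1 = j - 1" using f ij \<open>i \<noteq> 0\<close> \<open>j \<noteq> 0\<close>
          by (auto simp: bij_betw_def inj_on_def)
        then show ?thesis using \<open>i \<noteq> 0\<close> \<open>j \<noteq> 0\<close> by simp
      qed (use ij fin' vD in \<open>auto simp: h_def split: if_splits\<close>)
    qed
    show "h ` {0..<d+1} = insert v D"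
    proof
      show "h ` {0..<d+1} \<subseteq> insert v D" using fin by (auto simp: h_def)
      show "insert v D \<subseteq> h ` {0..<d+1}"
      proof
        fix u assume "u \<in> insert v D"
        then consider "u = v" | "u \<in> D" by auto
        then show "u \<in> h ` {0..<d+1}"
        proof cases
          case 1 then show ?thesis by (auto simp: h_def image_iff intro!: bexI[of _ 0])
        next
          case 2
          then obtain j where j: "j < d" "u = f j" using f by (auto simp: bij_betw_def)
          then show ?thesis by (auto simp: h_def image_iff intro!: bexI[of _ "j+1"])
        qed
      qed
    qed
  qed
  have hout: "h x \<notin> insert v D" if "x \<notin> {0..<d+1}" for x
    using that v D by (auto simp: h_def)
  have injSE: "inj_on (\<lambda>u. (min v u, max v u)) D"
    using D by (auto intro!: inj_onI simp: min_def max_def split: if_splits)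
  have key: "(\<Prod>(a,b)\<in>SE v D. P (x a) (x b)) = (\<Prod>j\<in>{1..d}. P ((x \<circ> h) 0) ((x \<circ> h) j))" for x
  proof -
    have "(\<Prod>(a,b)\<in>SE v D. P (x a) (x b)) = (\<Prod>u\<in>D. P (x (min v u)) (x (max v u)))"
      unfolding SE_def by (subst prod.reindex[OF injSE]) simp
    also have "\<dots> = (\<Prod>u\<in>D. P (x v) (x u))"
      by (intro prod.cong refl) (auto simp: min_def max_def Psym)
    also have "\<dots> = (\<Prod>j\<in>{0..<d}. P (x v) (x (f j)))"
      using prod.reindex_bij_betw[OF f, of "\<lambda>u. P (x v) (x u)"] by simp
    also have "\<dots> = (\<Prod>j\<in>{1..d}. P (x v) (x (f (j - 1))))"
    proof -
      have "{1..d} = Suc ` {0..<d}" by (auto simp: image_iff)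
      then show ?thesis by (simp only:) (subst prod.reindex, simp_all)
    qed
    also have "\<dots> = (\<Prod>j\<in>{1..d}. P ((x \<circ> h) 0) ((x \<circ> h) j))"
      by (intro prod.cong refl) (auto simp: h_def)
    finally show ?thesis .
  qed
  have "hom {0..<n} (SE v D) = hom (insert v D) (SE v D)"
    by (rule hom_restrict) (use v D in \<open>auto simp: SE_def min_def max_def split: if_splits\<close>)
  also have "\<dots> = measure_pmf.expectation (X {0..<d+1}) (\<lambda>y. \<Prod>j\<in>{1..d}. P (y 0) (y j))"
    unfolding hom_def by (subst hom_relabel[OF _ hbij hout]) (simp_all add: key)
  also have "\<dots> = s_star m l P d"
    unfolding s_star_def
    by (subst X_sum) (auto intro!: sum.cong prod.cong simp: atLeast0LessThan[symmetric] atLeastLessThanSuc_atLeastAtMost)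
  finally show ?thesis .
qed

definition PR :: "nat set \<Rightarrow> (nat \<times> nat) set" where
  "PR S = {(a,b). a \<in> S \<and> b \<in> S \<and> a < b}"

lemma hom_clique:
  assumes S: "S \<subseteq> {0..<n}" "card S = t"
  shows "hom {0..<n} (PR S) = s_clique m l P t"
proof -
  have fS: "finite S" using S finite_subset by blast
  obtain f where f: "bij_betw f {..<t} S" and mono: "strict_mono_on {..<t} f"
    using ex_bij_betw_strict_mono_card[OF fS] S by metis
  define h where "h j = (if j < t then f j else n + j)" for j
  have hbij: "bij_betw h {0..<t} S"
    using f by (auto simp: h_def bij_betw_def inj_on_def atLeast0LessThan image_def)
  have hout: "h x \<notin> S" if "x \<notin> {0..<t}" for x using that S by (auto simp: h_def)
  let ?Q = "{(j,q). j < q \<and> q < t}"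
  have finj: "f i = f j \<longleftrightarrow> i = j" if "i < t" "j < t" for i j
    using f that by (auto simp: bij_betw_def inj_on_def)
  have fless: "f i < f j \<longleftrightarrow> i < j" if "i < t" "j < t" for i j
    using mono that by (metis lessThan_iff linorder_neqE_nat order_less_asym strict_mono_onD)
  have img: "(\<lambda>(j,q). (f j, f q)) ` ?Q = PR S"
  proof
    show "(\<lambda>(j,q). (f j, f q)) ` ?Q \<subseteq> PR S"
      using f fless by (auto simp: PR_def bij_betw_def)
    show "PR S \<subseteq> (\<lambda>(j,q). (f j, f q)) ` ?Q"
    proof
      fix p assume "p \<in> PR S"
      then obtain a b where ab: "p = (a,b)" "a \<in> S" "b \<in> S" "a < b" by (auto simp: PR_def)
      obtain i j where "i < t" "j < t" "a = f i" "b = f j"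
        using f ab by (auto simp: bij_betw_def)
      then show "p \<in> (\<lambda>(j,q). (f j, f q)) ` ?Q"
        using ab fless by (auto simp: image_iff)
    qed
  qed
  have inj: "inj_on (\<lambda>(j,q). (f j, f q)) ?Q"
    using finj by (auto intro!: inj_onI)
  have key: "(\<Prod>(a,b)\<in>PR S. P (x a) (x b)) = (\<Prod>(j,q)\<in>?Q. P ((x \<circ> h) j) ((x \<circ> h) q))" for x
  proof -
    have "(\<Prod>(a,b)\<in>PR S. P (x a) (x b)) = (\<Prod>(j,q)\<in>?Q. P (x (f j)) (x (f q)))"
      unfolding img[symmetric] by (subst prod.reindex[OF inj]) (simp add: case_prod_unfold)
    also have "\<dots> = (\<Prod>(j,q)\<in>?Q. P ((x \<circ> h) j) ((x \<circ> h) q))"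
      by (intro prod.cong refl) (auto simp: h_def)
    finally show ?thesis .
  qed
  have "hom {0..<n} (PR S) = hom S (PR S)"
    by (rule hom_restrict) (use S in \<open>auto simp: PR_def\<close>)
  also have "\<dots> = measure_pmf.expectation (X {0..<t}) (\<lambda>y. \<Prod>(j,q)\<in>?Q. P (y j) (y q))"
    unfolding hom_def by (subst hom_relabel[OF _ hbij hout]) (simp_all add: key)
  also have "\<dots> = s_clique m l P t"
    unfolding s_clique_def
    by (subst X_sum) (auto intro!: sum.cong prod.cong simp: atLeast0LessThan[symmetric])
  finally show ?thesis .
qed

end

lemma sum_PiE_Suc:
  "(\<Sum>f\<in>PiE {..<Suc t} (\<lambda>_. M). g f) = (\<Sum>f\<in>PiE {..<t} (\<lambda>_. M). \<Sum>a\<in>M. g (f(t:=a)))"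
proof -
  have "(\<Sum>f\<in>PiE {..<Suc t} (\<lambda>_. M). g f) = (\<Sum>f\<in>(\<lambda>(y, g). g(t := y)) ` (M \<times> PiE {..<t} (\<lambda>_. M)). g f)"
    by (simp add: lessThan_Suc PiE_insert_eq)
  also have "\<dots> = (\<Sum>p\<in>M \<times> PiE {..<t} (\<lambda>_. M). g ((\<lambda>(y, g). g(t := y)) p))"
    by (rule sum.reindex[unfolded comp_def]) (use inj_combinator[of t "{..<t}" "\<lambda>_. M"] in simp)
  also have "\<dots> = (\<Sum>f\<in>PiE {..<t} (\<lambda>_. M). \<Sum>a\<in>M. g (f(t:=a)))"
    by (subst sum.swap) (simp add: sum.cartesian_product split_def)
  finally show ?thesis .
qed

lemma PiE_lessThan0: "PiE {..<0::nat} B = {\<lambda>_. undefined}" by simp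

lemma s_star_1: "s_star m l P 1 = (\<Sum>i<m. \<Sum>j<m. P i j * l i * l j)"
  unfolding s_star_def
  by (simp add: atLeast0LessThan numeral_2_eq_2 sum_PiE_Suc[of _ _ "{..<m}"] atLeast0_atMost_Suc mult_ac)

lemma s_star_2: "s_star m l P 2 = (\<Sum>i1<m. \<Sum>i2<m. \<Sum>i3<m. P i1 i2 * P i1 i3 * l i1 * l i2 * l i3)"
  unfolding s_star_def
  by (simp add: atLeast0LessThan numeral_3_eq_3 numeral_2_eq_2 sum_PiE_Suc[of _ _ "{..<m}"] atLeast0_atMost_Suc atLeastAtMostSuc_conv mult_ac)

lemma s_clique_3: "s_clique m l P 3 = (\<Sum>i<m. \<Sum>j<m. \<Sum>t<m. P i j * P i t * P j t * l i * l j * l t)"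
proof -
  have Q: "{(j,q). j < q \<and> q < (3::nat)} = {(0,1),(0,2),(1,2)}" by auto
  show ?thesis unfolding s_clique_def Q
    by (simp add: atLeast0LessThan numeral_3_eq_3 sum_PiE_Suc[of _ _ "{..<m}"] prod.lessThan_Suc numeral_2_eq_2 mult_ac)
qed


context mf begin

lemma hom_disj:
  assumes "a < b" "b < n" "c < d" "d < n" "a \<noteq> c" "a \<noteq> d" "b \<noteq> c" "b \<noteq> d"
  shows "hom {0..<n} {(a,b),(c,d)} = (\<Sum>i<m. \<Sum>j<m. P i j * l i * l j) ^ 2"
proof -
  define h where "h (j::nat) = (if j = 0 then a else if j = 1 then b else if j = 2 then c else if j = 3 then d else n + j)" for j
  have four: "{0..<4::nat} = {0,1,2,3}" by auto
  have hbij: "bij_betw h {0..<4} {a,b,c,d}"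
    unfolding four using assms by (auto simp: bij_betw_def h_def inj_on_def)
  have hout: "h x \<notin> {a,b,c,d}" if "x \<notin> {0..<4}" for x using that assms by (auto simp: h_def)
  have key: "(\<Prod>(u,v)\<in>{(a,b),(c,d)}. P (x u) (x v)) = P ((x \<circ> h) 0) ((x \<circ> h) 1) * P ((x \<circ> h) 2) ((x \<circ> h) 3)" for x
    using assms by (simp add: h_def)
  have "hom {0..<n} {(a,b),(c,d)} = hom {a,b,c,d} {(a,b),(c,d)}"
    by (rule hom_restrict) (use assms in auto)
  also have "\<dots> = measure_pmf.expectation (X {0..<4::nat}) (\<lambda>y. P (y 0) (y 1) * P (y 2) (y 3))"
    unfolding hom_def by (subst hom_relabel[OF _ hbij hout]) (simp_all add: key)
  also have "\<dots> = (\<Sum>i<m. \<Sum>j<m. \<Sum>p<m. \<Sum>q<m. (P i j * l i * l j) * (P p q * l p * l q))"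
    by (subst X_sum) (simp_all add: atLeast0LessThan numeral_3_eq_3 numeral_2_eq_2 eval_nat_numeral
        sum_PiE_Suc[of _ _ "{..<m}"] prod.lessThan_Suc mult_ac)
  also have "\<dots> = (\<Sum>i<m. \<Sum>j<m. P i j * l i * l j) ^ 2"
    by (simp only: power2_eq_square sum_distrib_right sum_distrib_left) (simp add: ac_simps)
  finally show ?thesis .
qed


lemma card_NP: "card (node_pairs N) = N choose 2"
proof (induction N)
  case 0 then show ?case by (simp add: node_pairs_def)
next
  case (Suc N)
  have eq: "node_pairs (Suc N) = node_pairs N \<union> (\<lambda>u. (u, N)) ` {..<N}"
    by (auto simp: node_pairs_def less_Suc_eq)
  have fin: "finite (node_pairs N)"
    by (rule finite_subset[of _ "{..<N} \<times> {..<N}"]) (auto simp: node_pairs_def)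
  have "card (node_pairs (Suc N)) = card (node_pairs N) + card ((\<lambda>u. (u, N)) ` {..<N})"
    unfolding eq by (rule card_Un_disjoint[OF fin]) (auto simp: node_pairs_def)
  also have "\<dots> = (N choose 2) + N" by (simp add: Suc card_image inj_on_def)
  finally show ?case by (simp add: numeral_2_eq_2)
qed

lemma G_cong: "(\<And>E. E \<subseteq> NP \<Longrightarrow> f E = g E) \<Longrightarrow> measure_pmf.expectation G f = measure_pmf.expectation G g"
  by (intro Bochner_Integration.integral_cong_AE AE_pmfI) (use set_G in auto)

lemma hom_edge: "a < b \<Longrightarrow> b < n \<Longrightarrow> hom {0..<n} {(a,b)} = (\<Sum>i<m. \<Sum>j<m. P i j * l i * l j)"
  using hom_star[of a "{b}" 1] s_star_1[of m l P] by (simp add: SE_def)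

lemma ES: "measure_pmf.expectation G (\<lambda>E. real (stars n d E)) = real n * real ((n - 1) choose d) * (s_star m l P d) ^ k"
proof -
  define I where "I = {(v,D). v < n \<and> D \<subseteq> {0..<n} - {v} \<and> card D = d}"
  have I_eq: "I = Sigma {..<n} (\<lambda>v. {D. D \<subseteq> {0..<n} - {v} \<and> card D = d})"
    by (auto simp: I_def)
  have finI: "finite I" unfolding I_eq by (intro finite_SigmaI) auto
  have cardI: "card I = n * ((n - 1) choose d)"
    unfolding I_eq by (subst card_SigmaI) (auto simp: n_subsets)
  have "measure_pmf.expectation G (\<lambda>E. real (stars n d E))
      = measure_pmf.expectation G (\<lambda>E. real (card {i\<in>I. (\<lambda>(v,D). SE v D) i \<subseteq> E}))"
  proof (intro G_cong arg_cong[where f=real])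
    fix E
    show "stars n d E = card {i\<in>I. (\<lambda>(v,D). SE v D) i \<subseteq> E}"
      unfolding stars_def I_def
      by (intro arg_cong[where f=card]) (auto simp: nbrs_def adj_def SE_def)
  qed
  also have "\<dots> = (\<Sum>i\<in>I. hom {0..<n} ((\<lambda>(v,D). SE v D) i) ^ k)"
    by (rule expect_count[OF finI])
       (auto simp: I_def SE_def node_pairs_def min_def max_def split: if_splits)
  also have "\<dots> = (\<Sum>i\<in>I. s_star m l P d ^ k)"
    by (intro sum.cong refl) (auto simp: I_def hom_star)
  finally show ?thesis by (simp add: cardI)
qed

lemma EC: "measure_pmf.expectation G (\<lambda>E. real (cliques n t E)) = real (n choose t) * (s_clique m l P t) ^ k"
proof -
  define I where "I = {S. S \<subseteq> {0..<n} \<and> card S = t}"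
  have finI: "finite I" unfolding I_def by auto
  have cardI: "card I = n choose t" unfolding I_def by (subst n_subsets) auto
  have "measure_pmf.expectation G (\<lambda>E. real (cliques n t E))
      = measure_pmf.expectation G (\<lambda>E. real (card {S\<in>I. PR S \<subseteq> E}))"
  proof (intro G_cong arg_cong[where f=real])
    fix E
    show "cliques n t E = card {S\<in>I. PR S \<subseteq> E}"
      unfolding cliques_def I_def
      by (intro arg_cong[where f=card]) (auto simp: adj_def PR_def min_def max_def; metis not_less_iff_gr_or_eq)
  qed
  also have "\<dots> = (\<Sum>S\<in>I. hom {0..<n} (PR S) ^ k)"
    by (rule expect_count[OF finI]) (auto simp: I_def PR_def node_pairs_def)
  also have "\<dots> = (\<Sum>S\<in>I. s_clique m l P t ^ k)"
    by (intro sum.cong refl) (auto simp: I_def hom_clique)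
  finally show ?thesis by (simp add: cardI)
qed


abbreviation s1 where "s1 \<equiv> (\<Sum>i<m. \<Sum>j<m. P i j * l i * l j)"

lemma E_card: "measure_pmf.expectation G (\<lambda>E. real (card E)) = real (n choose 2) * s1 ^ k"
proof -
  have "measure_pmf.expectation G (\<lambda>E. real (card E))
      = measure_pmf.expectation G (\<lambda>E. real (card {e\<in>NP. {e} \<subseteq> E}))"
    by (intro G_cong arg_cong[where f=real] arg_cong[where f=card]) auto
  also have "\<dots> = (\<Sum>e\<in>NP. hom {0..<n} {e} ^ k)"
    by (rule expect_count[OF finite_NP]) auto
  also have "\<dots> = (\<Sum>e\<in>NP. s1 ^ k)"
    by (intro sum.cong refl) (auto simp: node_pairs_def hom_edge)
  finally show ?thesis by (simp add: card_NP)
qed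

definition Sh :: "nat \<times> nat \<Rightarrow> (nat \<times> nat) set" where
  "Sh e = {f\<in>NP. f \<noteq> e \<and> (fst f = fst e \<or> fst f = snd e \<or> snd f = fst e \<or> snd f = snd e)}"

lemma hom_wedge:
  assumes "v < n" "x < n" "y < n" "x \<noteq> v" "y \<noteq> v" "x \<noteq> y"
  shows "hom {0..<n} {(min v x, max v x), (min v y, max v y)} = s_star m l P 2"
  using hom_star[of v "{x,y}" 2] assms by (simp add: SE_def)

lemma hom_pair:
  assumes e: "e \<in> NP" and f: "f \<in> NP"
  shows "hom {0..<n} {e,f} = (if f = e then s1 else if f \<in> Sh e then s_star m l P 2 else s1 ^ 2)"
proof -
  obtain a b where ab: "e = (a,b)" "a < b" "b < n" using e by (auto simp: node_pairs_def)
  obtain c d where cd: "f = (c,d)" "c < d" "d < n" using f by (auto simp: node_pairs_def)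
  show ?thesis
  proof (cases "f = e")
    case True then show ?thesis using ab hom_edge by simp
  next
    case ne: False
    show ?thesis
    proof (cases "f \<in> Sh e")
      case True
      then have sh: "c = a \<or> c = b \<or> d = a \<or> d = b" using ab cd by (auto simp: Sh_def)
      have "hom {0..<n} {e,f} = s_star m l P 2"
      proof -
        consider "c = a" | "c \<noteq> a" "c = b" | "c \<noteq> a" "c \<noteq> b" "d = a" | "c \<noteq> a" "c \<noteq> b" "d \<noteq> a" "d = b"
          using sh by blast
        then show ?thesis
        proof cases
          case 1 then show ?thesis using hom_wedge[of a b d] ab cd ne by (simp add: min_def max_def)
        next
          case 2 then show ?thesis using hom_wedge[of b a d] ab cd ne by (simp add: min_def max_def)
        next
          case 3 then show ?thesis using hom_wedge[of a b c] ab cd ne by (simp add: min_def max_def insert_commute)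
        next
          case 4 then show ?thesis using hom_wedge[of b a c] ab cd ne by (simp add: min_def max_def insert_commute)
        qed
      qed
      then show ?thesis using True ne by simp
    next
      case False
      then have "c \<noteq> a" "c \<noteq> b" "d \<noteq> a" "d \<noteq> b" using ab cd ne f by (auto simp: Sh_def)
      then show ?thesis using hom_disj[of a b c d] ab cd ne False by simp
    qed
  qed
qed

lemma card_Sh:
  assumes e: "e \<in> NP"
  shows "card (Sh e) = 2 * (n - 2)"
proof -
  obtain a b where ab: "e = (a,b)" "a < b" "b < n" using e by (auto simp: node_pairs_def)
  define R where "R = {0..<n} - {a,b}"
  have cardR: "card R = n - 2" using ab by (simp add: R_def card_Diff_subset)
  have inj: "inj_on (\<lambda>u. (min v u, max v u)) R" if "v \<in> {a,b}" for v
    using that by (auto intro!: inj_onI simp: R_def min_def max_def split: if_splits)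
  have eq: "Sh e = SE a R \<union> SE b R"
  proof
    show "Sh e \<subseteq> SE a R \<union> SE b R"
    proof
      fix f assume "f \<in> Sh e"
      then obtain c d where f: "f = (c,d)" "c < d" "d < n" "(c,d) \<noteq> (a,b)" "c = a \<or> c = b \<or> d = a \<or> d = b"
        using ab by (auto simp: Sh_def node_pairs_def) blast+
      then consider "c = a" "d \<in> R" | "c = b" "d \<in> R" | "d = a" "c \<in> R" | "d = b" "c \<in> R"
        using ab unfolding R_def by auto
      then show "f \<in> SE a R \<union> SE b R"
      proof cases
        case 1 then show ?thesis using f ab by (auto simp: SE_def image_iff intro!: bexI[of _ d])
      next
        case 2 then show ?thesis using f ab by (auto simp: SE_def image_iff intro!: bexI[of _ d])
      next
        case 3 then show ?thesis using f ab by (auto simp: SE_def image_iff intro!: bexI[of _ c])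
      next
        case 4 then show ?thesis using f ab by (auto simp: SE_def image_iff intro!: bexI[of _ c])
      qed
    qed
    show "SE a R \<union> SE b R \<subseteq> Sh e"
      using ab by (auto simp: Sh_def SE_def R_def node_pairs_def min_def max_def split: if_splits)
  qed
  have "card (Sh e) = card (SE a R) + card (SE b R)"
    unfolding eq by (rule card_Un_disjoint)
      (use ab in \<open>auto simp: SE_def R_def min_def max_def split: if_splits\<close>)
  also have "\<dots> = 2 * (n - 2)" using inj cardR by (simp add: SE_def card_image)
  finally show ?thesis .
qed


lemma E_card_sq:
  "measure_pmf.expectation G (\<lambda>E. (real (card E))\<^sup>2) =
     real (n choose 2) * (real (n choose 2) * s1 ^ (2*k) + (s1 ^ k - s1 ^ (2*k))
        + real (2 * (n - 2)) * (s_star m l P 2 ^ k - s1 ^ (2*k)))"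
proof -
  let ?W = "s_star m l P 2"
  have "measure_pmf.expectation G (\<lambda>E. (real (card E))\<^sup>2)
      = measure_pmf.expectation G (\<lambda>E. real (card {p\<in>NP \<times> NP. (\<lambda>(e,f). {e,f}) p \<subseteq> E}))"
  proof (rule G_cong)
    fix E assume E: "E \<subseteq> NP"
    have "{p\<in>NP \<times> NP. (\<lambda>(e,f). {e,f}) p \<subseteq> E} = E \<times> E" using E by auto
    then show "(real (card E))\<^sup>2 = real (card {p\<in>NP \<times> NP. (\<lambda>(e,f). {e,f}) p \<subseteq> E})"
      by (simp add: card_cartesian_product power2_eq_square)
  qed
  also have "\<dots> = (\<Sum>p\<in>NP \<times> NP. hom {0..<n} ((\<lambda>(e,f). {e,f}) p) ^ k)"
    by (rule expect_count) (auto simp: finite_NP)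
  also have "\<dots> = (\<Sum>e\<in>NP. \<Sum>f\<in>NP. hom {0..<n} {e,f} ^ k)"
    by (simp add: sum.cartesian_product case_prod_unfold)
  also have "\<dots> = (\<Sum>e\<in>NP. real (n choose 2) * s1 ^ (2*k) + (s1 ^ k - s1 ^ (2*k))
        + real (2 * (n - 2)) * (?W ^ k - s1 ^ (2*k)))"
  proof (rule sum.cong[OF refl])
    fix e assume e: "e \<in> NP"
    have "(\<Sum>f\<in>NP. hom {0..<n} {e,f} ^ k)
        = (\<Sum>f\<in>NP. s1 ^ (2*k) + ((if f = e then s1 ^ k - s1 ^ (2*k) else 0)
             + (if f \<in> Sh e then ?W ^ k - s1 ^ (2*k) else 0)))"
      by (intro sum.cong refl) (auto simp: hom_pair e Sh_def power_mult)
    also have "\<dots> = real (card NP) * s1 ^ (2*k) + (s1 ^ k - s1 ^ (2*k))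
        + real (card (Sh e)) * (?W ^ k - s1 ^ (2*k))"
    proof -
      have "NP \<inter> Sh e = Sh e" by (auto simp: Sh_def)
      then show ?thesis
        using e finite_NP by (simp add: sum.distrib sum.If_cases)
    qed
    finally show "(\<Sum>f\<in>NP. hom {0..<n} {e,f} ^ k) = real (n choose 2) * s1 ^ (2*k) + (s1 ^ k - s1 ^ (2*k))
        + real (2 * (n - 2)) * (?W ^ k - s1 ^ (2*k))"
      by (simp add: card_NP card_Sh e)
  qed
  finally show ?thesis by (simp add: card_NP)
qed

lemma choose2_nat: "2 * (x choose 2) = x * (x - 1)"
proof (induction x)
  case (Suc x)
  have "Suc x choose 2 = (x choose 1) + (x choose 2)" by (simp add: numeral_2_eq_2)
  then show ?case using Suc by (cases x) (auto simp: algebra_simps)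
qed simp

lemma choose2_real: "real (x choose 2) = real x * (real x - 1) / 2"
proof -
  have "real (2 * (x choose 2)) = real (x * (x - 1))" by (simp only: choose2_nat)
  then show ?thesis by (cases x) (auto simp: of_nat_diff field_simps)
qed

lemma Var_card:
  assumes "n \<ge> 2"
  shows "measure_pmf.variance G (\<lambda>E. real (card E)) =
     real (n choose 2) * s1 ^ k * (1 - real (n choose 2) * s1 ^ k)
     + 2 * measure_pmf.expectation G (\<lambda>E. real (stars n 2 E))
     + real (n choose 2) * real ((n - 2) choose 2) * s1 ^ (2 * k)"
proof -
  have "measure_pmf.variance G (\<lambda>E. real (card E)) =
      measure_pmf.expectation G (\<lambda>E. (real (card E))\<^sup>2) - (measure_pmf.expectation G (\<lambda>E. real (card E)))\<^sup>2"
    by (rule measure_pmf.variance_eq) (auto intro: integrable_measure_pmf_finite[OF finite_set_G])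
  also have "\<dots> = real (n choose 2) * (real (n choose 2) * s1 ^ (2*k) + (s1 ^ k - s1 ^ (2*k))
        + real (2 * (n - 2)) * (s_star m l P 2 ^ k - s1 ^ (2*k))) - (real (n choose 2) * s1 ^ k)\<^sup>2"
    by (simp add: E_card_sq E_card)
  also have "\<dots> = real (n choose 2) * s1 ^ k * (1 - real (n choose 2) * s1 ^ k)
     + 2 * (real n * real ((n - 1) choose 2) * s_star m l P 2 ^ k)
     + real (n choose 2) * real ((n - 2) choose 2) * s1 ^ (2 * k)"
  proof -
    have a: "real (n - 1) = real n - 1" "real (n - 2) = real n - 2" using assms by auto
    show ?thesis unfolding choose2_real a of_nat_mult
      by (simp add: power_mult power2_eq_square a field_simps)
  qed
  finally show ?thesis by (simp add: ES)
qed


lemma stars_deg: "stars n d E = (\<Sum>i\<in>{0..n-1}. (i choose d) * deg_count n i E)"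
proof -
  have nb: "nbrs n E v \<subseteq> {0..<n} - {v}" for v by (auto simp: nbrs_def adj_def)
  have finnb: "finite (nbrs n E v)" for v using nb[of v] finite_subset by blast
  have cnb: "card (nbrs n E v) \<le> n - 1" if "v < n" for v
  proof -
    have "card (nbrs n E v) \<le> card ({0..<n} - {v})" by (rule card_mono) (auto simp: nb)
    then show ?thesis using that by simp
  qed
  have "stars n d E = card (Sigma {..<n} (\<lambda>v. {D. D \<subseteq> nbrs n E v \<and> card D = d}))"
    unfolding stars_def by (intro arg_cong[where f=card]) auto
  also have "\<dots> = (\<Sum>v<n. card (nbrs n E v) choose d)"
    by (subst card_SigmaI) (auto simp: n_subsets finnb intro!: finite_subset[OF _ finite_Pow_iff[THEN iffD2, OF finnb]])
  also have "\<dots> = (\<Sum>i\<in>{0..n-1}. \<Sum>v\<in>{v\<in>{..<n}. card (nbrs n E v) = i}. card (nbrs n E v) choose d)"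
    by (rule sum.group[symmetric]) (use cnb in \<open>auto simp del: One_nat_def\<close>)
  also have "\<dots> = (\<Sum>i\<in>{0..n-1}. (i choose d) * deg_count n i E)"
    by (intro sum.cong refl) (simp add: deg_count_def)
  finally show ?thesis .
qed

lemma ES_ED: "measure_pmf.expectation G (\<lambda>E. real (stars n d E))
   = (\<Sum>i\<in>{0..n-1}. real (i choose d) * measure_pmf.expectation G (\<lambda>E. real (deg_count n i E)))"
proof -
  have "measure_pmf.expectation G (\<lambda>E. real (stars n d E))
      = measure_pmf.expectation G (\<lambda>E. \<Sum>i\<in>{0..n-1}. real (i choose d) * real (deg_count n i E))"
    by (simp add: stars_deg)
  also have "\<dots> = (\<Sum>i\<in>{0..n-1}. measure_pmf.expectation G (\<lambda>E. real (i choose d) * real (deg_count n i E)))"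
    by (rule Bochner_Integration.integral_sum) (rule integrable_measure_pmf_finite[OF finite_set_G])
  finally show ?thesis by simp
qed

lemma ED_rec:
  assumes "d \<le> n - 1"
  shows "measure_pmf.expectation G (\<lambda>E. real (stars n d E))
     = measure_pmf.expectation G (\<lambda>E. real (deg_count n d E))
       + (\<Sum>i = d + 1..n - 1. real (i choose d) * measure_pmf.expectation G (\<lambda>E. real (deg_count n i E)))"
proof -
  let ?f = "\<lambda>i. real (i choose d) * measure_pmf.expectation G (\<lambda>E. real (deg_count n i E))"
  have "(\<Sum>i\<in>{0..n-1}. ?f i) = (\<Sum>i\<in>{d..n-1}. ?f i)"
    by (rule sum.mono_neutral_right) auto
  also have "{d..n-1} = insert d {d+1..n-1}" using assms by auto
  also have "(\<Sum>i\<in>insert d {d+1..n-1}. ?f i) = ?f d + (\<Sum>i = d + 1..n - 1. ?f i)"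
    by (subst sum.insert) auto
  finally show ?thesis by (simp add: ES_ED)
qed


lemma main:
  assumes n2: "n \<ge> 2"
  shows
   "let G = mfng n m l P k;
        s = (\<Sum>i<m. \<Sum>j<m. P i j * l i * l j);
        ES = (\<lambda>d. measure_pmf.expectation G (\<lambda>E. real (stars n d E)));
        ED = (\<lambda>d. measure_pmf.expectation G (\<lambda>E. real (deg_count n d E)))
    in (\<forall>d. 1 \<le> d \<and> d \<le> n - 1 \<longrightarrow>
           ES d = real n * real ((n - 1) choose d) * (s_star m l P d) ^ k)
     \<and> ES 2 = real n * real ((n - 1) choose 2) *
           (\<Sum>i1<m. \<Sum>i2<m. \<Sum>i3<m. P i1 i2 * P i1 i3 * l i1 * l i2 * l i3) ^ k
     \<and> measure_pmf.variance G (\<lambda>E. real (card E)) =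
           real (n choose 2) * s ^ k * (1 - real (n choose 2) * s ^ k) + 2 * ES 2
           + real (n choose 2) * real ((n - 2) choose 2) * s ^ (2 * k)
     \<and> (\<forall>t. 2 \<le> t \<and> t \<le> n \<longrightarrow>
           measure_pmf.expectation G (\<lambda>E. real (cliques n t E))
             = real (n choose t) * (s_clique m l P t) ^ k)
     \<and> measure_pmf.expectation G (\<lambda>E. real (cliques n 3 E))
         = real (n choose 3) *
           (\<Sum>i<m. \<Sum>j<m. \<Sum>t<m. P i j * P i t * P j t * l i * l j * l t) ^ k
     \<and> ED (n - 1) = ES (n - 1)
     \<and> (\<forall>d. 1 \<le> d \<and> d \<le> n - 2 \<longrightarrow>
           ED d = ES d - (\<Sum>i = d + 1..n - 1. real (i choose d) * ED i))"
  unfolding Let_def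
proof (intro conjI allI impI)
  fix d show "measure_pmf.expectation G (\<lambda>E. real (stars n d E)) = real n * real ((n - 1) choose d) * (s_star m l P d) ^ k"
    by (rule ES)
next
  show "measure_pmf.expectation G (\<lambda>E. real (stars n 2 E)) = real n * real ((n - 1) choose 2) *
           (\<Sum>i1<m. \<Sum>i2<m. \<Sum>i3<m. P i1 i2 * P i1 i3 * l i1 * l i2 * l i3) ^ k"
    by (simp add: ES s_star_2)
next
  show "measure_pmf.variance G (\<lambda>E. real (card E)) =
           real (n choose 2) * s1 ^ k * (1 - real (n choose 2) * s1 ^ k) + 2 * measure_pmf.expectation G (\<lambda>E. real (stars n 2 E))
           + real (n choose 2) * real ((n - 2) choose 2) * s1 ^ (2 * k)"
    by (rule Var_card[OF n2])
next
  fix t show "measure_pmf.expectation G (\<lambda>E. real (cliques n t E)) = real (n choose t) * (s_clique m l P t) ^ k"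
    by (rule EC)
next
  show "measure_pmf.expectation G (\<lambda>E. real (cliques n 3 E))
         = real (n choose 3) * (\<Sum>i<m. \<Sum>j<m. \<Sum>t<m. P i j * P i t * P j t * l i * l j * l t) ^ k"
    by (simp add: EC s_clique_3)
next
  show "measure_pmf.expectation G (\<lambda>E. real (deg_count n (n - 1) E)) = measure_pmf.expectation G (\<lambda>E. real (stars n (n - 1) E))"
    using ED_rec[of "n - 1"] by simp
next
  fix d assume "1 \<le> d \<and> d \<le> n - 2"
  then have "d \<le> n - 1" by linarith
  then show "measure_pmf.expectation G (\<lambda>E. real (deg_count n d E)) = measure_pmf.expectation G (\<lambda>E. real (stars n d E))
      - (\<Sum>i = d + 1..n - 1. real (i choose d) * measure_pmf.expectation G (\<lambda>E. real (deg_count n i E)))"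
    using ED_rec[of d] by simp
qed

end

theorem corollary2:
  fixes n m k :: nat and l :: "nat \<Rightarrow> real" and P :: "nat \<Rightarrow> nat \<Rightarrow> real"
  assumes "m \<ge> 1" and "k \<ge> 1" and "n \<ge> 2"
    and "\<And>i. i < m \<Longrightarrow> l i \<ge> 0"
    and "(\<Sum>i<m. l i) = 1"
    and "\<And>i j. i < m \<Longrightarrow> j < m \<Longrightarrow> P i j = P j i"
    and "\<And>i j. i < m \<Longrightarrow> j < m \<Longrightarrow> 0 \<le> P i j \<and> P i j \<le> 1"
  shows
   "let G = mfng n m l P k;
        s = (\<Sum>i<m. \<Sum>j<m. P i j * l i * l j);
        ES = (\<lambda>d. measure_pmf.expectation G (\<lambda>E. real (stars n d E)));
        ED = (\<lambda>d. measure_pmf.expectation G (\<lambda>E. real (deg_count n d E)))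
    in (\<forall>d. 1 \<le> d \<and> d \<le> n - 1 \<longrightarrow>
           ES d = real n * real ((n - 1) choose d) * (s_star m l P d) ^ k)
     \<and> ES 2 = real n * real ((n - 1) choose 2) *
           (\<Sum>i1<m. \<Sum>i2<m. \<Sum>i3<m. P i1 i2 * P i1 i3 * l i1 * l i2 * l i3) ^ k
     \<and> measure_pmf.variance G (\<lambda>E. real (card E)) =
           real (n choose 2) * s ^ k * (1 - real (n choose 2) * s ^ k) + 2 * ES 2
           + real (n choose 2) * real ((n - 2) choose 2) * s ^ (2 * k)
     \<and> (\<forall>t. 2 \<le> t \<and> t \<le> n \<longrightarrow>
           measure_pmf.expectation G (\<lambda>E. real (cliques n t E))
             = real (n choose t) * (s_clique m l P t) ^ k)
     \<and> measure_pmf.expectation G (\<lambda>E. real (cliques n 3 E))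
         = real (n choose 3) *
           (\<Sum>i<m. \<Sum>j<m. \<Sum>t<m. P i j * P i t * P j t * l i * l j * l t) ^ k
     \<and> ED (n - 1) = ES (n - 1)
     \<and> (\<forall>d. 1 \<le> d \<and> d \<le> n - 2 \<longrightarrow>
           ED d = ES d - (\<Sum>i = d + 1..n - 1. real (i choose d) * ED i))"
proof -
  define Ps where "Ps i j = (if i < m \<and> j < m then P i j else 0)" for i j
  interpret mf n m k l Ps
    by unfold_locales (use assms in \<open>auto simp: Ps_def\<close>)
  have Pe: "P i j = Ps i j" if "i < m" "j < m" for i j using that by (simp add: Ps_def)
  have supp: "c u r < m" if "c \<in> set_pmf C" "u < n" "r < k" for c u r
  proof -
    have "c \<in> PiE_dflt {0..<n} (\<lambda>_. 0) (set_pmf \<circ> (\<lambda>_. category_pmf m l k))"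
      using set_Pi_pmf_subset'[of "{0..<n}" "\<lambda>_. 0" "\<lambda>_. category_pmf m l k"] that by auto
    then have "c u \<in> set_pmf (category_pmf m l k)" using that by (auto simp: PiE_dflt_def)
    then have "c u \<in> PiE_dflt {0..<k} 0 (set_pmf \<circ> (\<lambda>_. L))"
      using set_Pi_pmf_subset'[of "{0..<k}" 0 "\<lambda>_. L"] by (auto simp: category_pmf_def)
    then have "c u r \<in> set_pmf L" using that by (auto simp: PiE_dflt_def)
    then show ?thesis using set_L by auto
  qed
  have eqG: "mfng n m l P k = mfng n m l Ps k"
    unfolding mfng_def
  proof (rule bind_pmf_cong[OF refl])
    fix c assume c: "c \<in> set_pmf C"
    have "Pi_pmf (node_pairs n) False (\<lambda>(u,v). bernoulli_pmf (edge_prob P k (c u) (c v)))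
        = Pi_pmf (node_pairs n) False (\<lambda>(u,v). bernoulli_pmf (edge_prob Ps k (c u) (c v)))"
    proof (rule Pi_pmf_cong)
      fix x assume "x \<in> node_pairs n"
      then obtain u v where "x = (u,v)" "u < n" "v < n" by (auto simp: node_pairs_def)
      then show "(\<lambda>(u,v). bernoulli_pmf (edge_prob P k (c u) (c v))) x
           = (\<lambda>(u,v). bernoulli_pmf (edge_prob Ps k (c u) (c v))) x"
        using supp[OF c] by (auto simp: edge_prob_def Pe intro!: prod.cong)
    qed auto
    then show "Pi_pmf (node_pairs n) False (\<lambda>(u,v). bernoulli_pmf (edge_prob P k (c u) (c v))) \<bind>
          (\<lambda>b. return_pmf {e \<in> node_pairs n. b e}) =
         Pi_pmf (node_pairs n) False (\<lambda>(u,v). bernoulli_pmf (edge_prob Ps k (c u) (c v))) \<bind>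
          (\<lambda>b. return_pmf {e \<in> node_pairs n. b e})" by simp
  qed
  have eqss: "s_star m l P d = s_star m l Ps d" for d
    unfolding s_star_def
    by (intro sum.cong refl arg_cong2[where f="(*)"] prod.cong) (auto simp: PiE_def Pi_def Pe)
  have eqsc: "s_clique m l P t = s_clique m l Ps t" for t
    unfolding s_clique_def
    by (intro sum.cong refl arg_cong2[where f="(*)"] prod.cong) (auto simp: PiE_def Pi_def Pe)
  have eq1: "(\<Sum>i<m. \<Sum>j<m. P i j * l i * l j) = (\<Sum>i<m. \<Sum>j<m. Ps i j * l i * l j)"
    by (simp add: Pe)
  have eq2: "(\<Sum>i1<m. \<Sum>i2<m. \<Sum>i3<m. P i1 i2 * P i1 i3 * l i1 * l i2 * l i3)
      = (\<Sum>i1<m. \<Sum>i2<m. \<Sum>i3<m. Ps i1 i2 * Ps i1 i3 * l i1 * l i2 * l i3)"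
    by (simp add: Pe)
  have eq3: "(\<Sum>i<m. \<Sum>j<m. \<Sum>t<m. P i j * P i t * P j t * l i * l j * l t)
      = (\<Sum>i<m. \<Sum>j<m. \<Sum>t<m. Ps i j * Ps i t * Ps j t * l i * l j * l t)"
    by (simp add: Pe)
  show ?thesis
    using main[OF assms(3)] unfolding Let_def eqG eqss eqsc eq1 eq2 eq3 .
qed

end
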